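(* Let $n',n''\ge 0$ be integers, $n=n'+n''$, and consider the system $\dot x=f(x)$ on $\mathbb{R}^n$ with $x=(x';x'')$, $x'\in\mathbb{R}^{n'}$, $x''\in\mathbb{R}^{n''}$, of the form $$\dot x'(t)=A'x'(t)+D,\qquad \dot x''(t)=A''x''(t)+g(x'(t)),$$ where $A'\in\mathbb{R}^{n'\times n'}$ and $A''\in\mathbb{R}^{n''\times n''}$ are constant matrices, $D\in\mathbb{R}^{n'}$ is a constant vector, and $g:\mathbb{R}^{n'}\to\mathbb{R}^{n''}$ is a polynomial map. Then this system (i.e., the vector field $f(x)=(A'x'+D;\,A''x''+g(x'))$) is super-linearizable.
   Context: Super-linearization: let $\Pi:\mathbb{R}^{n+m}\to\mathbb{R}^n$ be the projection $\Pi(z)=(z_1,\ldots,z_n)$. A vector field $f:\mathbb{R}^n\to\mathbb{R}^n$ is super-linearizable if there exist an integer $m\ge 0$, a matrix $A\in\mathbb{R}^{(n+m)\times(n+m)}$, a vector $D\in\mathbb{R}^{n+m}$ and an injective map $p:\mathbb{R}^n\to\mathbb{R}^m$ (the observables) such that for all $x_0\in\mathbb{R}^n$ and all $t$, $\Pi\big(e^{t(Az+D)}z_0\big)=e^{tf}x_0$ where $z_0=(x_0,p(x_0))$. Here $e^{tg}y_0$ denotes the solution at time $t$ of $\dot y=g(y)$ with initial state $y_0$. *)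

theory Defs
  imports "HOL-Analysis.Analysis"
begin

text \<open>Vectors of R^k are represented as functions nat => real vanishing at indices >= k.
  Matrices are functions nat => nat => real (only entries below the size matter).\<close>

definition vec :: "nat \<Rightarrow> (nat \<Rightarrow> real) set" where
  "vec k = {x. \<forall>i\<ge>k. x i = 0}"

text \<open>y is a global solution (defined for all real t) of y' = F(y) in R^k
  (differentiability componentwise, equivalent to vector differentiability in finite dimension).\<close>
definition solves :: "nat \<Rightarrow> ((nat \<Rightarrow> real) \<Rightarrow> (nat \<Rightarrow> real)) \<Rightarrow> (real \<Rightarrow> nat \<Rightarrow> real) \<Rightarrow> bool" where
  "solves k F y \<longleftrightarrow> (\<forall>t. y t \<in> vec k) \<and>
     (\<forall>t. \<forall>i<k. ((\<lambda>s. y s i) has_real_derivative F (y t) i) (at t))"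

definition flow :: "nat \<Rightarrow> ((nat \<Rightarrow> real) \<Rightarrow> (nat \<Rightarrow> real)) \<Rightarrow> (nat \<Rightarrow> real) \<Rightarrow> real \<Rightarrow> (nat \<Rightarrow> real)" where
  "flow k F y0 t = (THE y. solves k F y \<and> y 0 = y0) t"

definition aff :: "nat \<Rightarrow> (nat \<Rightarrow> nat \<Rightarrow> real) \<Rightarrow> (nat \<Rightarrow> real) \<Rightarrow> (nat \<Rightarrow> real) \<Rightarrow> (nat \<Rightarrow> real)" where
  "aff k A D z = (\<lambda>i. if i < k then (\<Sum>j<k. A i j * z j) + D i else 0)"

definition proj :: "nat \<Rightarrow> (nat \<Rightarrow> real) \<Rightarrow> (nat \<Rightarrow> real)" where
  "proj n z = (\<lambda>i. if i < n then z i else 0)"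

definition concat :: "nat \<Rightarrow> (nat \<Rightarrow> real) \<Rightarrow> (nat \<Rightarrow> real) \<Rightarrow> (nat \<Rightarrow> real)" where
  "concat n x w = (\<lambda>i. if i < n then x i else w (i - n))"

definition super_linearizable :: "nat \<Rightarrow> ((nat \<Rightarrow> real) \<Rightarrow> (nat \<Rightarrow> real)) \<Rightarrow> bool" where
  "super_linearizable n f \<longleftrightarrow>
     (\<exists>(m::nat) (A::nat \<Rightarrow> nat \<Rightarrow> real) (D::nat \<Rightarrow> real) (p::(nat \<Rightarrow> real) \<Rightarrow> (nat \<Rightarrow> real)).
        (\<forall>x\<in>vec n. p x \<in> vec m) \<and> inj_on p (vec n) \<and>
        (\<forall>x0\<in>vec n. \<forall>t::real.
           proj n (flow (n + m) (aff (n + m) A D) (concat n x0 (p x0)) t) = flow n f x0 t))"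

inductive_set poly_fun :: "nat \<Rightarrow> ((nat \<Rightarrow> real) \<Rightarrow> real) set" for k :: nat where
  pf_const: "(\<lambda>x. c) \<in> poly_fun k"
| pf_var: "i < k \<Longrightarrow> (\<lambda>x. x i) \<in> poly_fun k"
| pf_add: "p \<in> poly_fun k \<Longrightarrow> q \<in> poly_fun k \<Longrightarrow> (\<lambda>x. p x + q x) \<in> poly_fun k"
| pf_mult: "p \<in> poly_fun k \<Longrightarrow> q \<in> poly_fun k \<Longrightarrow> (\<lambda>x. p x * q x) \<in> poly_fun k"

definition tri_field :: "nat \<Rightarrow> nat \<Rightarrow> (nat \<Rightarrow> nat \<Rightarrow> real) \<Rightarrow> (nat \<Rightarrow> real) \<Rightarrow> (nat \<Rightarrow> nat \<Rightarrow> real)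
    \<Rightarrow> ((nat \<Rightarrow> real) \<Rightarrow> (nat \<Rightarrow> real)) \<Rightarrow> (nat \<Rightarrow> real) \<Rightarrow> (nat \<Rightarrow> real)" where
  "tri_field n1 n2 A1 D A2 g x = (\<lambda>i.
     if i < n1 then (\<Sum>j<n1. A1 i j * x j) + D i
     else if i < n1 + n2 then (\<Sum>j<n2. A2 (i - n1) j * x (n1 + j)) + g (proj n1 x) (i - n1)
     else 0)"

end

theory Submission imports Defs begin

lemma amgm2: "\<bar>a::real\<bar> * \<bar>b\<bar> \<le> (a^2 + b^2)/2"
proof -
  have "0 \<le> (\<bar>a\<bar> - \<bar>b\<bar>)^2" by simp
  then show ?thesis unfolding power2_diff power2_abs by simp
qed

lemma lin_uniq:
  fixes w :: "real \<Rightarrow> nat \<Rightarrow> real" and I :: "nat set" and B :: "nat \<Rightarrow> nat \<Rightarrow> real"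
  assumes fin: "finite I"
  and der: "\<And>i t. i\<in>I \<Longrightarrow> ((\<lambda>s. w s i) has_real_derivative (\<Sum>j\<in>I. B i j * w t j)) (at t)"
  and init: "\<And>i. i\<in>I \<Longrightarrow> w 0 i = 0"
  and iI: "i \<in> I"
  shows "w t i = 0"
proof -
  define E where "E s = (\<Sum>i\<in>I. (w s i)^2)" for s
  define E' where "E' s = (\<Sum>i\<in>I. 2 * w s i * (\<Sum>j\<in>I. B i j * w s j))" for s
  define L where "L = (\<Sum>i\<in>I. \<Sum>j\<in>I. \<bar>B i j\<bar>)"
  have L0: "L \<ge> 0" unfolding L_def by (simp add: sum_nonneg)
  have E0: "E s \<ge> 0" for s unfolding E_def by (simp add: sum_nonneg)
  have dE: "(E has_real_derivative E' s) (at s)" for s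
    unfolding E_def E'_def
  proof (rule DERIV_sum)
    fix i assume "i \<in> I"
    from DERIV_power[OF der[OF this, of s], of 2]
    show "((\<lambda>s. (w s i)^2) has_real_derivative 2 * w s i * (\<Sum>j\<in>I. B i j * w s j)) (at s)"
      by (simp add: algebra_simps)
  qed
  have Einit: "E 0 = 0" unfolding E_def using init by simp
  have sq: "\<bar>w s i\<bar> * \<bar>w s j\<bar> \<le> E s" if "i\<in>I" "j\<in>I" for s i j
  proof -
    have "\<bar>w s i\<bar> * \<bar>w s j\<bar> \<le> ((w s i)^2 + (w s j)^2)/2"
      by (rule amgm2)
    also have "\<dots> \<le> E s"
    proof (cases "i = j")
      case True
      have "(w s j)^2 \<le> E s" unfolding E_def using that fin
        by (intro member_le_sum) auto
      then show ?thesis using True by simp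
    next
      case False
      have "(w s i)^2 + (w s j)^2 = (\<Sum>k\<in>{i,j}. (w s k)^2)" using False by simp
      also have "\<dots> \<le> E s" unfolding E_def using that fin
        by (intro sum_mono2) auto
      finally show ?thesis using E0[of s] by simp
    qed
    finally show ?thesis .
  qed
  have bnd: "\<bar>E' s\<bar> \<le> 2 * L * E s" for s
  proof -
    have "\<bar>E' s\<bar> \<le> (\<Sum>i\<in>I. \<bar>2 * w s i * (\<Sum>j\<in>I. B i j * w s j)\<bar>)"
      unfolding E'_def by (rule sum_abs)
    also have "\<dots> \<le> (\<Sum>i\<in>I. \<Sum>j\<in>I. 2 * (\<bar>B i j\<bar> * E s))"
    proof (rule sum_mono)
      fix i assume i: "i \<in> I"
      have "\<bar>2 * w s i * (\<Sum>j\<in>I. B i j * w s j)\<bar> = 2 * \<bar>w s i\<bar> * \<bar>\<Sum>j\<in>I. B i j * w s j\<bar>"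
        by (simp add: abs_mult)
      also have "\<dots> \<le> 2 * \<bar>w s i\<bar> * (\<Sum>j\<in>I. \<bar>B i j\<bar> * \<bar>w s j\<bar>)"
        by (intro mult_left_mono) (auto intro: order.trans[OF sum_abs] simp: abs_mult)
      also have "\<dots> = (\<Sum>j\<in>I. 2 * (\<bar>B i j\<bar> * (\<bar>w s i\<bar> * \<bar>w s j\<bar>)))"
        by (simp add: sum_distrib_left algebra_simps)
      also have "\<dots> \<le> (\<Sum>j\<in>I. 2 * (\<bar>B i j\<bar> * E s))"
        using sq i by (intro sum_mono mult_left_mono) auto
      finally show "\<bar>2 * w s i * (\<Sum>j\<in>I. B i j * w s j)\<bar> \<le> (\<Sum>j\<in>I. 2 * (\<bar>B i j\<bar> * E s))" .
    qed
    also have "\<dots> = 2 * L * E s" unfolding L_def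
      by (simp add: sum_distrib_left sum_distrib_right algebra_simps)
    finally show ?thesis .
  qed
  have "E t = 0"
  proof (cases "t \<ge> 0")
    case True
    define F where "F s = E s * exp (- (2*L) * s)" for s
    have "F t \<le> F 0"
    proof (rule DERIV_nonpos_imp_nonincreasing[OF True])
      fix x
      have "(F has_real_derivative (E' x * exp (- (2*L) * x) + E x * (exp (- (2*L) * x) * (- (2*L))))) (at x)"
        unfolding F_def using dE by (auto intro!: derivative_eq_intros)
      moreover have "E' x * exp (- (2*L) * x) + E x * (exp (- (2*L) * x) * (- (2*L))) = (E' x - 2*L*E x) * exp (- (2*L) * x)"
        by (simp add: algebra_simps)
      moreover have "(E' x - 2*L*E x) * exp (- (2*L) * x) \<le> 0"
        using bnd[of x] by (intro mult_nonpos_nonneg) auto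
      ultimately show "\<exists>y. DERIV F x :> y \<and> y \<le> 0" by metis
    qed
    then have "E t * exp (- (2*L) * t) \<le> 0" unfolding F_def using Einit by simp
    then show ?thesis using E0[of t] by (simp add: mult_le_0_iff)
  next
    case False
    define F where "F s = E s * exp ((2*L) * s)" for s
    have tle: "t \<le> 0" using False by simp
    have "F t \<le> F 0"
    proof (rule DERIV_nonneg_imp_nondecreasing[OF tle])
      fix x
      have "(F has_real_derivative (E' x * exp ((2*L) * x) + E x * (exp ((2*L) * x) * ((2*L))))) (at x)"
        unfolding F_def using dE by (auto intro!: derivative_eq_intros)
      moreover have "E' x * exp ((2*L) * x) + E x * (exp ((2*L) * x) * ((2*L))) = (E' x + 2*L*E x) * exp ((2*L) * x)"
        by (simp add: algebra_simps)
      moreover have "(E' x + 2*L*E x) * exp ((2*L) * x) \<ge> 0"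
        using bnd[of x] by (intro mult_nonneg_nonneg) auto
      ultimately show "\<exists>y. DERIV F x :> y \<and> y \<ge> 0" by metis
    qed
    then have "E t * exp ((2*L) * t) \<le> 0" unfolding F_def using Einit by simp
    then show ?thesis using E0[of t] by (simp add: mult_le_0_iff)
  qed
  then have "(w t i)^2 = 0" unfolding E_def using fin iI
    by (subst (asm) sum_nonneg_eq_0_iff) auto
  then show ?thesis by simp
qed


fun mpw :: "nat \<Rightarrow> (nat\<Rightarrow>nat\<Rightarrow>real) \<Rightarrow> (nat\<Rightarrow>real) \<Rightarrow> nat \<Rightarrow> (nat \<Rightarrow> real)" where
  "mpw K A z 0 = z"
| "mpw K A z (Suc j) = (\<lambda>i. if i<K then (\<Sum>l<K. A i l * mpw K A z j l) else 0)"

lemma factsuc: "of_nat (Suc n) * (x / fact (Suc n)) = (x::real) / fact n"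
proof -
  have "fact (Suc n) = (of_nat (Suc n) :: real) * fact n" by (rule fact_Suc)
  moreover have c: "(of_nat (Suc n) :: real) \<noteq> 0" by auto
  ultimately show ?thesis
    by (simp only: times_divide_eq_right mult_divide_mult_cancel_left[OF c])
qed

lemma lin_exists:
  fixes A :: "nat \<Rightarrow> nat \<Rightarrow> real" and z0 :: "nat \<Rightarrow> real"
  assumes z0: "z0 \<in> vec K"
  shows "\<exists>y. y 0 = z0 \<and> (\<forall>t. y t \<in> vec K) \<and>
     (\<forall>t i. i<K \<longrightarrow> ((\<lambda>s. y s i) has_real_derivative (\<Sum>j<K. A i j * y t j)) (at t))"
proof -
  define c where "c i j = mpw K A z0 j i / fact j" for i j
  define y where "y t i = (\<Sum>j. c i j * t^j)" for t i
  define M where "M = (\<Sum>i<K. \<bar>z0 i\<bar>)"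
  define a where "a = (\<Sum>i<K. \<Sum>l<K. \<bar>A i l\<bar>)"
  have M0: "M \<ge> 0" unfolding M_def by (simp add: sum_nonneg)
  have a0: "a \<ge> 0" unfolding a_def by (simp add: sum_nonneg)
  have z0K: "z0 i = 0" if "i \<ge> K" for i using z0 that unfolding vec_def by auto
  have rowb: "(\<Sum>l<K. \<bar>A i l\<bar>) \<le> a" if "i < K" for i
    unfolding a_def using that by (intro member_le_sum) (auto simp: sum_nonneg)
  have bound: "\<bar>mpw K A z0 j i\<bar> \<le> M * a^j" for j i
  proof (induction j arbitrary: i)
    case 0
    show ?case
    proof (cases "i < K")
      case True
      have "\<bar>z0 i\<bar> \<le> M" unfolding M_def using True by (intro member_le_sum) auto
      then show ?thesis by simp
    next
      case False then show ?thesis using z0K M0 by simp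
    qed
  next
    case (Suc j)
    show ?case
    proof (cases "i < K")
      case True
      have "\<bar>\<Sum>l<K. A i l * mpw K A z0 j l\<bar> \<le> (\<Sum>l<K. \<bar>A i l\<bar> * (M * a^j))"
        by (rule order.trans[OF sum_abs], rule sum_mono)
           (auto simp: abs_mult intro: mult_left_mono Suc.IH)
      also have "\<dots> = (\<Sum>l<K. \<bar>A i l\<bar>) * (M * a^j)" by (simp add: sum_distrib_right)
      also have "\<dots> \<le> a * (M * a^j)" using rowb[OF True] M0 a0
        by (intro mult_right_mono) auto
      finally show ?thesis using True by (simp add: algebra_simps)
    next
      case False then show ?thesis using M0 a0 by simp
    qed
  qed
  have summ: "summable (\<lambda>j. c i j * x^j)" for i x
  proof (rule summable_comparison_test')
    show "summable (\<lambda>j. M * (inverse (fact j) * (a * \<bar>x\<bar>)^j))"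
      by (intro summable_mult summable_exp)
    fix j :: nat
    have "norm (c i j * x^j) = \<bar>mpw K A z0 j i\<bar> * \<bar>x\<bar>^j / fact j"
      unfolding c_def by (simp add: abs_mult power_abs)
    also have "\<dots> \<le> M * a^j * \<bar>x\<bar>^j / fact j"
      by (intro divide_right_mono mult_right_mono bound) auto
    also have "\<dots> = M * (inverse (fact j) * (a * \<bar>x\<bar>)^j)"
      by (simp add: power_mult_distrib field_simps)
    finally show "norm (c i j * x^j) \<le> M * (inverse (fact j) * (a * \<bar>x\<bar>)^j)" .
  qed
  have "y 0 = z0"
  proof
    fix i show "y 0 i = z0 i" unfolding y_def using powser_zero[of "c i"] by (simp add: c_def)
  qed
  moreover have "y t \<in> vec K" for t
  proof -
    have "c i j = 0" if "i \<ge> K" for i j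
      using that z0K unfolding c_def by (cases j) auto
    then show ?thesis unfolding vec_def y_def by auto
  qed
  moreover have "((\<lambda>s. y s i) has_real_derivative (\<Sum>j<K. A i j * y t j)) (at t)" if iK: "i < K" for t i
  proof -
    have d: "((\<lambda>s. y s i) has_real_derivative (\<Sum>n. diffs (c i) n * t^n)) (at t)"
      unfolding y_def by (rule termdiffs_strong_converges_everywhere[OF summ])
    have "diffs (c i) n * t^n = (\<Sum>l<K. A i l * (c l n * t^n))" for n
    proof -
      have "diffs (c i) n = of_nat (Suc n) * (mpw K A z0 (Suc n) i / fact (Suc n))"
        unfolding diffs_def c_def by simp
      also have "\<dots> = mpw K A z0 (Suc n) i / fact n"
        by (rule factsuc)
      also have "\<dots> = (\<Sum>l<K. A i l * c l n)"
        using iK unfolding c_def by (simp add: sum_divide_distrib)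
      finally show ?thesis by (simp add: sum_distrib_right mult.assoc)
    qed
    then have "(\<Sum>n. diffs (c i) n * t^n) = (\<Sum>n. \<Sum>l<K. A i l * (c l n * t^n))" by simp
    also have "\<dots> = (\<Sum>l<K. \<Sum>n. A i l * (c l n * t^n))"
      by (rule suminf_sum) (intro summable_mult summ)
    also have "\<dots> = (\<Sum>l<K. A i l * y t l)"
      unfolding y_def by (intro sum.cong refl suminf_mult summ)
    finally show ?thesis using d by simp
  qed
  ultimately show ?thesis by blast
qed


datatype ix = Ix nat | Pr ix ix | Lf ix | Rt ix

definition traj :: "nat \<Rightarrow> (nat\<Rightarrow>nat\<Rightarrow>real) \<Rightarrow> (nat\<Rightarrow>real) \<Rightarrow> (real \<Rightarrow> nat \<Rightarrow> real) \<Rightarrow> bool" where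
  "traj n1 A1 D u \<longleftrightarrow> (\<forall>i<n1. \<forall>s. ((\<lambda>s. u s i) has_real_derivative (\<Sum>j<n1. A1 i j * u s j) + D i) (at s))"

definition closed_fam :: "nat \<Rightarrow> (nat\<Rightarrow>nat\<Rightarrow>real) \<Rightarrow> (nat\<Rightarrow>real) \<Rightarrow> ix set \<Rightarrow> (ix \<Rightarrow> (nat\<Rightarrow>real) \<Rightarrow> real) \<Rightarrow> (ix \<Rightarrow> ix \<Rightarrow> real) \<Rightarrow> bool" where
  "closed_fam n1 A1 D S \<Phi> C \<longleftrightarrow> finite S \<and> (\<forall>u t. traj n1 A1 D u \<longrightarrow>
     (\<forall>k\<in>S. ((\<lambda>s. \<Phi> k (u s)) has_real_derivative (\<Sum>l\<in>S. C k l * \<Phi> l (u t))) (at t)))"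

definition uPhi :: "(ix \<Rightarrow> (nat\<Rightarrow>real) \<Rightarrow> real) \<Rightarrow> (ix \<Rightarrow> (nat\<Rightarrow>real) \<Rightarrow> real) \<Rightarrow> ix \<Rightarrow> (nat\<Rightarrow>real) \<Rightarrow> real" where
  "uPhi F1 F2 k = (case k of Lf a \<Rightarrow> F1 a | Rt b \<Rightarrow> F2 b | _ \<Rightarrow> (\<lambda>_. 0))"

definition uC :: "(ix \<Rightarrow> ix \<Rightarrow> real) \<Rightarrow> (ix \<Rightarrow> ix \<Rightarrow> real) \<Rightarrow> ix \<Rightarrow> ix \<Rightarrow> real" where
  "uC C1 C2 k l = (case k of Lf a \<Rightarrow> (case l of Lf b \<Rightarrow> C1 a b | _ \<Rightarrow> 0)
                     | Rt a \<Rightarrow> (case l of Rt b \<Rightarrow> C2 a b | _ \<Rightarrow> 0) | _ \<Rightarrow> 0)"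

lemma sum_union_ix:
  assumes "finite S1" "finite S2"
  shows "(\<Sum>k\<in>Lf`S1 \<union> Rt`S2. f k) = (\<Sum>a\<in>S1. f (Lf a)) + (\<Sum>b\<in>S2. f (Rt b))"
proof -
  have "(\<Sum>k\<in>Lf`S1 \<union> Rt`S2. f k) = (\<Sum>k\<in>Lf`S1. f k) + (\<Sum>k\<in>Rt`S2. f k)"
    using assms by (intro sum.union_disjoint) auto
  also have "\<dots> = (\<Sum>a\<in>S1. f (Lf a)) + (\<Sum>b\<in>S2. f (Rt b))"
    by (simp add: sum.reindex inj_on_def)
  finally show ?thesis .
qed

lemma fam_union:
  assumes "closed_fam n1 A1 D S1 F1 C1" "closed_fam n1 A1 D S2 F2 C2"
  shows "closed_fam n1 A1 D (Lf`S1 \<union> Rt`S2) (uPhi F1 F2) (uC C1 C2)"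
proof -
  have f: "finite S1" "finite S2" using assms unfolding closed_fam_def by auto
  show ?thesis unfolding closed_fam_def
  proof (intro conjI allI impI ballI)
    show "finite (Lf`S1 \<union> Rt`S2)" using f by auto
    fix u t k assume u: "traj n1 A1 D u" and k: "k \<in> Lf`S1 \<union> Rt`S2"
    show "((\<lambda>s. uPhi F1 F2 k (u s)) has_real_derivative (\<Sum>l\<in>Lf`S1 \<union> Rt`S2. uC C1 C2 k l * uPhi F1 F2 l (u t))) (at t)"
      using k
    proof
      assume "k \<in> Lf`S1"
      then obtain a where a: "a \<in> S1" "k = Lf a" by auto
      have "((\<lambda>s. F1 a (u s)) has_real_derivative (\<Sum>l\<in>S1. C1 a l * F1 l (u t))) (at t)"
        using assms(1) u a unfolding closed_fam_def by auto
      then show ?thesis using a f by (simp add: sum_union_ix uPhi_def uC_def)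
    next
      assume "k \<in> Rt`S2"
      then obtain a where a: "a \<in> S2" "k = Rt a" by auto
      have "((\<lambda>s. F2 a (u s)) has_real_derivative (\<Sum>l\<in>S2. C2 a l * F2 l (u t))) (at t)"
        using assms(2) u a unfolding closed_fam_def by auto
      then show ?thesis using a f by (simp add: sum_union_ix uPhi_def uC_def)
    qed
  qed
qed

definition pPhi :: "(ix \<Rightarrow> (nat\<Rightarrow>real) \<Rightarrow> real) \<Rightarrow> (ix \<Rightarrow> (nat\<Rightarrow>real) \<Rightarrow> real) \<Rightarrow> ix \<Rightarrow> (nat\<Rightarrow>real) \<Rightarrow> real" where
  "pPhi F1 F2 k = (case k of Pr a b \<Rightarrow> (\<lambda>x. F1 a x * F2 b x) | _ \<Rightarrow> (\<lambda>_. 0))"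

definition pC :: "(ix \<Rightarrow> ix \<Rightarrow> real) \<Rightarrow> (ix \<Rightarrow> ix \<Rightarrow> real) \<Rightarrow> ix \<Rightarrow> ix \<Rightarrow> real" where
  "pC C1 C2 k l = (case k of Pr a b \<Rightarrow> (case l of Pr a' b' \<Rightarrow>
       C1 a a' * (if b = b' then 1 else 0) + (if a = a' then 1 else 0) * C2 b b' | _ \<Rightarrow> 0) | _ \<Rightarrow> 0)"

lemma sum_prod_ix:
  assumes "finite S1" "finite S2"
  shows "(\<Sum>k\<in>(\<lambda>(a,b). Pr a b)`(S1\<times>S2). f k) = (\<Sum>a\<in>S1. \<Sum>b\<in>S2. f (Pr a b))"
proof -
  have "inj_on (\<lambda>(a,b). Pr a b) (S1\<times>S2)" by (auto simp: inj_on_def)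
  then have "(\<Sum>k\<in>(\<lambda>(a,b). Pr a b)`(S1\<times>S2). f k) = (\<Sum>(a,b)\<in>S1\<times>S2. f (Pr a b))"
    by (simp add: sum.reindex case_prod_unfold)
  also have "\<dots> = (\<Sum>a\<in>S1. \<Sum>b\<in>S2. f (Pr a b))"
    by (rule sum.cartesian_product[symmetric])
  finally show ?thesis .
qed

lemma fam_prod:
  assumes c1: "closed_fam n1 A1 D S1 F1 C1" and c2: "closed_fam n1 A1 D S2 F2 C2"
  shows "closed_fam n1 A1 D ((\<lambda>(a,b). Pr a b)`(S1\<times>S2)) (pPhi F1 F2) (pC C1 C2)"
proof -
  have f: "finite S1" "finite S2" using assms unfolding closed_fam_def by auto
  show ?thesis unfolding closed_fam_def
  proof (intro conjI allI impI ballI)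
    show "finite ((\<lambda>(a,b). Pr a b)`(S1\<times>S2))" using f by auto
    fix u t k assume u: "traj n1 A1 D u" and k: "k \<in> (\<lambda>(a,b). Pr a b)`(S1\<times>S2)"
    then obtain a b where ab: "a \<in> S1" "b \<in> S2" "k = Pr a b" by auto
    have d1: "((\<lambda>s. F1 a (u s)) has_real_derivative (\<Sum>l\<in>S1. C1 a l * F1 l (u t))) (at t)"
      using c1 u ab unfolding closed_fam_def by auto
    have d2: "((\<lambda>s. F2 b (u s)) has_real_derivative (\<Sum>l\<in>S2. C2 b l * F2 l (u t))) (at t)"
      using c2 u ab unfolding closed_fam_def by auto
    have d: "((\<lambda>s. F1 a (u s) * F2 b (u s)) has_real_derivative
       (\<Sum>l\<in>S1. C1 a l * F1 l (u t)) * F2 b (u t) + F1 a (u t) * (\<Sum>l\<in>S2. C2 b l * F2 l (u t))) (at t)"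
      by (rule DERIV_mult[OF d1 d2, THEN DERIV_cong]) (simp add: mult.commute)
    have "(\<Sum>l\<in>(\<lambda>(a,b). Pr a b)`(S1\<times>S2). pC C1 C2 k l * pPhi F1 F2 l (u t))
      = (\<Sum>a'\<in>S1. \<Sum>b'\<in>S2. (C1 a a' * (if b = b' then 1 else 0) + (if a = a' then 1 else 0) * C2 b b') * (F1 a' (u t) * F2 b' (u t)))"
      using f ab by (simp add: sum_prod_ix pC_def pPhi_def)
    also have "\<dots> = (\<Sum>a'\<in>S1. \<Sum>b'\<in>S2. (if b = b' then C1 a a' * (F1 a' (u t) * F2 b' (u t)) else 0))
                   + (\<Sum>a'\<in>S1. \<Sum>b'\<in>S2. (if a = a' then C2 b b' * (F1 a' (u t) * F2 b' (u t)) else 0))"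
      by (simp only: sum.distrib[symmetric]) (intro sum.cong refl, simp add: algebra_simps)
    also have "\<dots> = (\<Sum>a'\<in>S1. C1 a a' * (F1 a' (u t) * F2 b (u t))) + (\<Sum>b'\<in>S2. C2 b b' * (F1 a (u t) * F2 b' (u t)))"
      using f ab by (subst (2) sum.swap) simp
    also have "\<dots> = (\<Sum>l\<in>S1. C1 a l * F1 l (u t)) * F2 b (u t) + F1 a (u t) * (\<Sum>l\<in>S2. C2 b l * F2 l (u t))"
      by (simp add: sum_distrib_left sum_distrib_right algebra_simps)
    finally show "((\<lambda>s. pPhi F1 F2 k (u s)) has_real_derivative (\<Sum>l\<in>(\<lambda>(a,b). Pr a b)`(S1\<times>S2). pC C1 C2 k l * pPhi F1 F2 l (u t))) (at t)"
      using d ab by (simp add: pPhi_def)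
  qed
qed

lemma poly_closed:
  assumes "p \<in> poly_fun n1"
  shows "\<exists>S \<Phi> C e. closed_fam n1 A1 D S \<Phi> C \<and> (\<forall>x. p x = (\<Sum>k\<in>S. e k * \<Phi> k x))"
  using assms
proof (induction rule: poly_fun.induct)
  case (pf_const c)
  have "closed_fam n1 A1 D {Ix 0} (\<lambda>k x. 1) (\<lambda>k l. 0)"
    unfolding closed_fam_def by simp
  then show ?case by (intro exI[of _ "{Ix 0}"] exI[of _ "\<lambda>k x. 1"] exI[of _ "\<lambda>k l. 0"] exI[of _ "\<lambda>k. c"]) simp
next
  case (pf_var i)
  define S where "S = insert (Ix n1) (Ix ` {..<n1})"
  define F where "F k x = (case k of Ix j \<Rightarrow> if j < n1 then x j else 1 | _ \<Rightarrow> 0)" for k and x :: "nat \<Rightarrow> real"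
  define C where "C k l = (case k of Ix j \<Rightarrow> (case l of Ix l' \<Rightarrow> if j < n1 then (if l' < n1 then A1 j l' else D j) else 0 | _ \<Rightarrow> 0) | _ \<Rightarrow> 0)" for k l
  have sumS: "(\<Sum>k\<in>S. f k) = f (Ix n1) + (\<Sum>j<n1. f (Ix j))" for f :: "ix \<Rightarrow> real"
    unfolding S_def by (subst sum.insert) (auto simp: sum.reindex inj_on_def)
  have "closed_fam n1 A1 D S F C"
    unfolding closed_fam_def
  proof (intro conjI allI impI ballI)
    show "finite S" unfolding S_def by simp
    fix u t k assume u: "traj n1 A1 D u" and k: "k \<in> S"
    show "((\<lambda>s. F k (u s)) has_real_derivative (\<Sum>l\<in>S. C k l * F l (u t))) (at t)"
    proof (cases "k = Ix n1")
      case True then show ?thesis by (simp add: F_def C_def sumS)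
    next
      case False
      then obtain j where j: "j < n1" "k = Ix j" using k unfolding S_def by auto
      have "((\<lambda>s. u s j) has_real_derivative (\<Sum>l<n1. A1 j l * u t l) + D j) (at t)"
        using u j unfolding traj_def by auto
      then show ?thesis using j by (simp add: F_def C_def sumS add.commute)
    qed
  qed
  moreover have "\<forall>x. x i = (\<Sum>k\<in>S. (\<lambda>k. if k = Ix i then 1 else 0) k * F k x)"
    using pf_var by (simp add: sumS F_def if_distrib[of "\<lambda>c. c * _"] sum.delta' cong: if_cong)
  ultimately show ?case by (intro exI[of _ S] exI[of _ F] exI[of _ C] exI[of _ "\<lambda>k. if k = Ix i then 1 else 0"]) simp
next
  case (pf_add p q)
  then obtain S1 F1 C1 e1 S2 F2 C2 e2 where
    h: "closed_fam n1 A1 D S1 F1 C1" "\<forall>x. p x = (\<Sum>k\<in>S1. e1 k * F1 k x)"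
       "closed_fam n1 A1 D S2 F2 C2" "\<forall>x. q x = (\<Sum>k\<in>S2. e2 k * F2 k x)" by metis
  have f: "finite S1" "finite S2" using h unfolding closed_fam_def by auto
  define e where "e k = (case k of Lf a \<Rightarrow> e1 a | Rt b \<Rightarrow> e2 b | _ \<Rightarrow> 0)" for k
  have "p x + q x = (\<Sum>k\<in>Lf`S1 \<union> Rt`S2. e k * uPhi F1 F2 k x)" for x
    using h f by (simp add: sum_union_ix e_def uPhi_def)
  then show ?case using fam_union[OF h(1) h(3)] by blast
next
  case (pf_mult p q)
  then obtain S1 F1 C1 e1 S2 F2 C2 e2 where
    h: "closed_fam n1 A1 D S1 F1 C1" "\<forall>x. p x = (\<Sum>k\<in>S1. e1 k * F1 k x)"
       "closed_fam n1 A1 D S2 F2 C2" "\<forall>x. q x = (\<Sum>k\<in>S2. e2 k * F2 k x)" by metis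
  have f: "finite S1" "finite S2" using h unfolding closed_fam_def by auto
  define e where "e k = (case k of Pr a b \<Rightarrow> e1 a * e2 b | _ \<Rightarrow> 0)" for k
  have "p x * q x = (\<Sum>k\<in>(\<lambda>(a,b). Pr a b)`(S1\<times>S2). e k * pPhi F1 F2 k x)" for x
    using h f by (simp add: sum_prod_ix e_def pPhi_def sum_product algebra_simps)
  then show ?case using fam_prod[OF h(1) h(3)] by blast
qed

lemma polys_closed:
  fixes N :: nat
  assumes "\<forall>i<N. (\<lambda>x. g x i) \<in> poly_fun n1"
  shows "\<exists>S \<Phi> C e. closed_fam n1 A1 D S \<Phi> C \<and> (\<forall>i<N. \<forall>x. g x i = (\<Sum>k\<in>S. e i k * \<Phi> k x))"
  using assms
proof (induction N)
  case 0
  have "closed_fam n1 A1 D {} (\<lambda>k x. 0) (\<lambda>k l. 0)" unfolding closed_fam_def by simp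
  then show ?case by blast
next
  case (Suc N)
  then obtain S1 F1 C1 e1 where
    h1: "closed_fam n1 A1 D S1 F1 C1" "\<forall>i<N. \<forall>x. g x i = (\<Sum>k\<in>S1. e1 i k * F1 k x)" by auto
  obtain S2 F2 C2 e2 where
    h2: "closed_fam n1 A1 D S2 F2 C2" "\<forall>x. g x N = (\<Sum>k\<in>S2. e2 k * F2 k x)"
    using poly_closed[of "\<lambda>x. g x N" n1 A1 D] Suc.prems by auto
  have f: "finite S1" "finite S2" using h1 h2 unfolding closed_fam_def by auto
  define e where "e i k = (if i < N then (case k of Lf a \<Rightarrow> e1 i a | _ \<Rightarrow> 0) else (case k of Rt b \<Rightarrow> e2 b | _ \<Rightarrow> 0))" for i k
  have "g x i = (\<Sum>k\<in>Lf`S1 \<union> Rt`S2. e i k * uPhi F1 F2 k x)" if "i < Suc N" for x i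
  proof (cases "i < N")
    case True then show ?thesis using h1 f by (simp add: sum_union_ix e_def uPhi_def)
  next
    case False then have "i = N" using that by simp
    then show ?thesis using h2 f by (simp add: sum_union_ix e_def uPhi_def)
  qed
  then show ?case using fam_union[OF h1(1) h2(1)] by blast
qed


lemma sum_shift_ivl: "(\<Sum>j\<in>{a..<a+b}. f j) = (\<Sum>l<b. f (a+l::nat))"
  by (induct b) (auto simp: add_Suc_right)

lemma sum_window:
  fixes a b K :: nat
  assumes "b \<le> K" "a \<le> b"
  shows "(\<Sum>j<K. (if a \<le> j \<and> j < b then h j else 0)) = (\<Sum>l<b-a. h (a+l))"
proof -
  have "(\<Sum>j<K. (if a \<le> j \<and> j < b then h j else 0)) = (\<Sum>j\<in>{j\<in>{..<K}. a \<le> j \<and> j < b}. h j)"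
    by (rule sum.inter_filter[symmetric]) simp
  also have "{j\<in>{..<K}. a \<le> j \<and> j < b} = {a..<a+(b-a)}" using assms by auto
  finally show ?thesis by (simp add: sum_shift_ivl)
qed

lemma sum_delta_lt: "c < (K::nat) \<Longrightarrow> (\<Sum>j<K. (if j = c then v else 0)) = (v::real)"
  by (simp add: sum.delta')


lemma polys_nat:
  fixes n2 :: nat
  assumes "\<forall>i<n2. (\<lambda>x. g x i) \<in> poly_fun n1"
  shows "\<exists>(m::nat) \<Psi> C e. (\<forall>u t k. traj n1 A1 D u \<longrightarrow> k < m \<longrightarrow>
            ((\<lambda>s. \<Psi> k (u s)) has_real_derivative (\<Sum>l<m. C k l * \<Psi> l (u t))) (at t))
          \<and> (\<forall>i<n2. \<forall>x. g x i = (\<Sum>k<m. e i k * \<Psi> k x))"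
proof -
  obtain S \<Phi> C e where h: "closed_fam n1 A1 D S \<Phi> C" "\<forall>i<n2. \<forall>x. g x i = (\<Sum>k\<in>S. e i k * \<Phi> k x)"
    using polys_closed[OF assms, of A1 D] by blast
  have fin: "finite S" using h unfolding closed_fam_def by auto
  obtain hb where hb: "bij_betw hb {0..<card S} S" using ex_bij_betw_nat_finite[OF fin] by blast
  have re: "(\<Sum>k\<in>S. f k) = (\<Sum>l<card S. f (hb l))" for f :: "ix \<Rightarrow> real"
    using sum.reindex_bij_betw[OF hb, of f] by (simp add: atLeast0LessThan)
  have hbS: "hb k \<in> S" if "k < card S" for k using hb that unfolding bij_betw_def by auto
  have P1: "\<forall>u t k. traj n1 A1 D u \<longrightarrow> k < card S \<longrightarrow>
            ((\<lambda>s. \<Phi> (hb k) (u s)) has_real_derivative (\<Sum>l<card S. C (hb k) (hb l) * \<Phi> (hb l) (u t))) (at t)"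
  proof (intro allI impI)
    fix u t k assume u: "traj n1 A1 D u" and k: "k < card S"
    have "((\<lambda>s. \<Phi> (hb k) (u s)) has_real_derivative (\<Sum>l\<in>S. C (hb k) l * \<Phi> l (u t))) (at t)"
      using h(1) u hbS[OF k] unfolding closed_fam_def by auto
    then show "((\<lambda>s. \<Phi> (hb k) (u s)) has_real_derivative (\<Sum>l<card S. C (hb k) (hb l) * \<Phi> (hb l) (u t))) (at t)"
      by (simp add: re)
  qed
  have P2: "\<forall>i<n2. \<forall>x. g x i = (\<Sum>k<card S. e i (hb k) * \<Phi> (hb k) x)"
    using h(2) by (simp add: re)
  show ?thesis
    apply (rule exI[of _ "card S"])
    apply (rule exI[of _ "\<lambda>k. \<Phi> (hb k)"])
    apply (rule exI[of _ "\<lambda>k l. C (hb k) (hb l)"])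
    apply (rule exI[of _ "\<lambda>i k. e i (hb k)"])
    using P1 P2 by simp
qed

lemma lin_unique_sol:
  assumes "solves K (aff K A D) y1" "solves K (aff K A D) y2" "y1 0 = y2 0"
  shows "y1 = y2"
proof (intro ext)
  fix t i
  show "y1 t i = y2 t i"
  proof (cases "i < K")
    case True
    have "(\<lambda>s i. y1 s i - y2 s i) t i = 0"
    proof (rule lin_uniq[where I="{..<K}" and B=A and w="\<lambda>s i. y1 s i - y2 s i"])
      fix i t assume i: "i \<in> {..<K}"
      have "((\<lambda>s. y1 s i - y2 s i) has_real_derivative aff K A D (y1 t) i - aff K A D (y2 t) i) (at t)"
        using assms(1,2) i unfolding solves_def by (auto intro!: DERIV_diff)
      then show "((\<lambda>s. (\<lambda>s i. y1 s i - y2 s i) s i) has_real_derivative (\<Sum>j\<in>{..<K}. A i j * (\<lambda>s i. y1 s i - y2 s i) t j)) (at t)"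
        using i by (simp add: aff_def sum_subtractf algebra_simps)
    qed (use assms(3) True in auto)
    then show ?thesis by simp
  next
    case False then show ?thesis using assms unfolding solves_def vec_def by auto
  qed
qed

lemma tri_unique_sol:
  fixes n1 n2 :: nat
  assumes s1: "solves (n1+n2) (tri_field n1 n2 A1 D A2 g) y1"
    and s2: "solves (n1+n2) (tri_field n1 n2 A1 D A2 g) y2" and init: "y1 0 = y2 0"
  shows "y1 = y2"
proof -
  let ?f = "tri_field n1 n2 A1 D A2 g"
  have d1: "((\<lambda>s. y1 s i) has_real_derivative ?f (y1 t) i) (at t)" if "i < n1+n2" for i t
    using s1 that unfolding solves_def by auto
  have d2: "((\<lambda>s. y2 s i) has_real_derivative ?f (y2 t) i) (at t)" if "i < n1+n2" for i t
    using s2 that unfolding solves_def by auto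
  have first: "y1 t i = y2 t i" if "i < n1" for t i
  proof -
    have "(\<lambda>s i. y1 s i - y2 s i) t i = 0"
    proof (rule lin_uniq[where I="{..<n1}" and B=A1 and w="\<lambda>s i. y1 s i - y2 s i"])
      fix i t assume i: "i \<in> {..<n1}"
      have "((\<lambda>s. y1 s i - y2 s i) has_real_derivative ?f (y1 t) i - ?f (y2 t) i) (at t)"
        using i by (auto intro!: DERIV_diff d1 d2)
      then show "((\<lambda>s. (\<lambda>s i. y1 s i - y2 s i) s i) has_real_derivative (\<Sum>j\<in>{..<n1}. A1 i j * (\<lambda>s i. y1 s i - y2 s i) t j)) (at t)"
        using i by (simp add: tri_field_def sum_subtractf algebra_simps)
    qed (use init that in auto)
    then show ?thesis by simp
  qed
  have pr: "proj n1 (y1 t) = proj n1 (y2 t)" for t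
    unfolding proj_def using first by auto
  have second: "y1 t i = y2 t i" if "n1 \<le> i" "i < n1+n2" for t i
  proof -
    have "(\<lambda>s i. y1 s i - y2 s i) t i = 0"
    proof (rule lin_uniq[where I="{n1..<n1+n2}" and B="\<lambda>i j. A2 (i-n1) (j-n1)" and w="\<lambda>s i. y1 s i - y2 s i"])
      fix i t assume i: "i \<in> {n1..<n1+n2}"
      have "((\<lambda>s. y1 s i - y2 s i) has_real_derivative ?f (y1 t) i - ?f (y2 t) i) (at t)"
        using i by (auto intro!: DERIV_diff d1 d2)
      moreover have "?f (y1 t) i - ?f (y2 t) i = (\<Sum>j<n2. A2 (i-n1) j * (y1 t (n1+j) - y2 t (n1+j)))"
        using i pr[of t] by (simp add: tri_field_def sum_subtractf algebra_simps)
      moreover have "(\<Sum>j\<in>{n1..<n1+n2}. A2 (i-n1) (j-n1) * (y1 t j - y2 t j)) = (\<Sum>j<n2. A2 (i-n1) j * (y1 t (n1+j) - y2 t (n1+j)))"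
        by (simp add: sum_shift_ivl)
      ultimately show "((\<lambda>s. (\<lambda>s i. y1 s i - y2 s i) s i) has_real_derivative (\<Sum>j\<in>{n1..<n1+n2}. A2 (i-n1) (j-n1) * (\<lambda>s i. y1 s i - y2 s i) t j)) (at t)"
        by simp
    qed (use init that in auto)
    then show ?thesis by simp
  qed
  show ?thesis
  proof (intro ext)
    fix t i show "y1 t i = y2 t i"
    proof (cases "i < n1+n2")
      case True then show ?thesis using first second by (cases "i < n1") auto
    next
      case False then show ?thesis using s1 s2 unfolding solves_def vec_def by auto
    qed
  qed
qed

theorem proposition1:
  fixes n1 n2 :: nat
    and A1 A2 :: "nat \<Rightarrow> nat \<Rightarrow> real"
    and D :: "nat \<Rightarrow> real"
    and g :: "(nat \<Rightarrow> real) \<Rightarrow> (nat \<Rightarrow> real)"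
  assumes "\<forall>i<n2. (\<lambda>x. g x i) \<in> poly_fun n1"
  shows "super_linearizable (n1 + n2) (tri_field n1 n2 A1 D A2 g)"
proof -
  obtain m' :: nat and \<Psi> C e where
    clo: "\<And>u t k. traj n1 A1 D u \<Longrightarrow> k < m' \<Longrightarrow>
            ((\<lambda>s. \<Psi> k (u s)) has_real_derivative (\<Sum>l<m'. C k l * \<Psi> l (u t))) (at t)"
    and rep: "\<And>i x. i < n2 \<Longrightarrow> g x i = (\<Sum>k<m'. e i k * \<Psi> k x)"
    using polys_nat[OF assms, of A1 D] by blast
  define n where "n = n1 + n2"
  define c where "c = n + m'"
  define m where "m = m' + 1 + n"
  define K where "K = n + m"
  define f where "f = tri_field n1 n2 A1 D A2 g"
  define p where "p x = (\<lambda>i. if i < m' then \<Psi> i (proj n1 x) else if i = m' then 1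
                   else if i < m' + 1 + n then x (i - (m'+1)) else 0)" for x :: "nat \<Rightarrow> real"
  define Az where "Az i j = (if i < n1 then (if 0 \<le> j \<and> j < n1 then A1 i j else 0) + (if j = c then D i else 0)
     else if i < n then (if n1 \<le> j \<and> j < n then A2 (i-n1) (j-n1) else 0) + (if n \<le> j \<and> j < n+m' then e (i-n1) (j-n) else 0)
     else if i < n+m' then (if n \<le> j \<and> j < n+m' then C (i-n) (j-n) else 0)
     else 0)" for i j
  have cK: "c < K" unfolding c_def K_def m_def by simp
  have sa: "(\<Sum>j<K. Az i j * z j) = (\<Sum>j<n1. A1 i j * z j) + D i * z c" if "i < n1" for i z
  proof -
    have "Az i j * z j = (if 0 \<le> j \<and> j < n1 then A1 i j * z j else 0) + (if j = c then D i * z c else 0)" for j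
      using that by (cases "j < n1"; cases "j = c") (simp_all add: Az_def distrib_right)
    then have "(\<Sum>j<K. Az i j * z j) = (\<Sum>j<K. (if 0 \<le> j \<and> j < n1 then A1 i j * z j else 0)) + (\<Sum>j<K. (if j = c then D i * z c else 0))"
      by (simp only: sum.distrib[symmetric])
    also have "\<dots> = (\<Sum>j<n1. A1 i j * z j) + D i * z c"
      using cK by (subst sum_window) (auto simp: K_def m_def n_def)
    finally show ?thesis .
  qed
  have sb: "(\<Sum>j<K. Az i j * z j) = (\<Sum>j<n2. A2 (i-n1) j * z (n1+j)) + (\<Sum>k<m'. e (i-n1) k * z (n+k))"
    if "n1 \<le> i" "i < n" for i z
  proof -
    have "Az i j * z j = (if n1 \<le> j \<and> j < n then A2 (i-n1) (j-n1) * z j else 0) + (if n \<le> j \<and> j < n+m' then e (i-n1) (j-n) * z j else 0)" for j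
      using that by (simp add: Az_def distrib_right)
    then have "(\<Sum>j<K. Az i j * z j) = (\<Sum>j<K. (if n1 \<le> j \<and> j < n then A2 (i-n1) (j-n1) * z j else 0)) + (\<Sum>j<K. (if n \<le> j \<and> j < n+m' then e (i-n1) (j-n) * z j else 0))"
      by (simp only: sum.distrib[symmetric])
    also have "\<dots> = (\<Sum>j<n2. A2 (i-n1) j * z (n1+j)) + (\<Sum>k<m'. e (i-n1) k * z (n+k))"
      by (subst sum_window, simp add: K_def m_def n_def, simp add: n_def)+ (simp add: n_def)
    finally show ?thesis .
  qed
  have sc: "(\<Sum>j<K. Az i j * z j) = (\<Sum>l<m'. C (i-n) l * z (n+l))"
    if "n \<le> i" "i < n+m'" for i z
  proof -
    have "Az i j * z j = (if n \<le> j \<and> j < n+m' then C (i-n) (j-n) * z j else 0)" for j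
      using that by (simp add: Az_def n_def)
    then have "(\<Sum>j<K. Az i j * z j) = (\<Sum>j<K. (if n \<le> j \<and> j < n+m' then C (i-n) (j-n) * z j else 0))"
      by simp
    also have "\<dots> = (\<Sum>l<m'. C (i-n) l * z (n+l))"
      by (subst sum_window) (simp_all add: K_def m_def)
    finally show ?thesis .
  qed
  have sd: "(\<Sum>j<K. Az c j * z j) = 0" for z
    by (simp add: Az_def c_def n_def)
  have pvec: "p x \<in> vec m" for x unfolding p_def vec_def m_def by auto
  have pinj: "inj_on p (vec n)"
  proof (rule inj_onI)
    fix x y assume x: "x \<in> vec n" and y: "y \<in> vec n" and e: "p x = p y"
    show "x = y"
    proof
      fix i show "x i = y i"
      proof (cases "i < n")
        case True
        have "p x (m'+1+i) = p y (m'+1+i)" using e by simp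
        then show ?thesis using True unfolding p_def by simp
      next
        case False then show ?thesis using x y unfolding vec_def by auto
      qed
    qed
  qed
  have main: "proj n (flow K (aff K Az (\<lambda>_. 0)) (concat n x0 (p x0)) t) = flow n f x0 t"
    if x0: "x0 \<in> vec n" for x0 t
  proof -
    define z0 where "z0 = concat n x0 (p x0)"
    have z0v: "z0 \<in> vec K" unfolding z0_def vec_def concat_def p_def K_def m_def by auto
    obtain y where y0: "y 0 = z0" and yv: "\<And>t. y t \<in> vec K"
      and yd: "\<And>t i. i < K \<Longrightarrow> ((\<lambda>s. y s i) has_real_derivative (\<Sum>j<K. Az i j * y t j)) (at t)"
      using lin_exists[OF z0v, of Az] by blast
    have ysol: "solves K (aff K Az (\<lambda>_. 0)) y"
      unfolding solves_def aff_def using yv yd by simp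
    have fl: "flow K (aff K Az (\<lambda>_. 0)) z0 = y"
      unfolding flow_def
      by (rule the_equality) (use ysol y0 lin_unique_sol in auto)
    have yc: "y s c = 1" for s
    proof -
      have "\<forall>x. ((\<lambda>s. y s c) has_real_derivative 0) (at x)"
        using yd[OF cK] sd by simp
      then have "y s c = y 0 c" by (rule DERIV_isconst_all)
      also have "\<dots> = 1" unfolding y0 z0_def concat_def p_def c_def by simp
      finally show ?thesis .
    qed
    define u where "u s = proj n1 (y s)" for s
    have uy: "u s j = y s j" if "j < n1" for s j using that unfolding u_def proj_def by simp
    have trajU: "traj n1 A1 D u"
      unfolding traj_def
    proof (intro allI impI)
      fix i s assume i: "i < n1"
      have "(\<lambda>s. u s i) = (\<lambda>s. y s i)" using uy[OF i] by auto
      moreover have iK: "i < K" using i unfolding K_def n_def by simp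
      ultimately have "((\<lambda>s. u s i) has_real_derivative (\<Sum>j<n1. A1 i j * y s j) + D i * y s c) (at s)"
        using yd[OF iK, of s] sa[OF i, of "y s"] by simp
      then show "((\<lambda>s. u s i) has_real_derivative (\<Sum>j<n1. A1 i j * u s j) + D i) (at s)"
        using yc uy by simp
    qed
    have pz: "proj n1 z0 = proj n1 x0"
      unfolding z0_def proj_def concat_def n_def by auto
    have yPsi: "y s (n+k) = \<Psi> k (u s)" if k: "k < m'" for s k
    proof -
      have "(\<lambda>s i. y s i - \<Psi> (i-n) (u s)) s (n+k) = 0"
      proof (rule lin_uniq[where I="{n..<n+m'}" and B="\<lambda>i j. C (i-n) (j-n)" and w="\<lambda>s i. y s i - \<Psi> (i-n) (u s)"])
        fix i t assume i: "i \<in> {n..<n+m'}"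
        have iK: "i < K" using i unfolding K_def m_def by simp
        have "((\<lambda>s. y s i - \<Psi> (i-n) (u s)) has_real_derivative
              (\<Sum>l<m'. C (i-n) l * y t (n+l)) - (\<Sum>l<m'. C (i-n) l * \<Psi> l (u t))) (at t)"
          using yd[OF iK, of t] sc[of i "y t"] i clo[OF trajU, of "i-n" t] by (auto intro!: DERIV_diff)
        moreover have "(\<Sum>j\<in>{n..<n+m'}. C (i-n) (j-n) * (y t j - \<Psi> (j-n) (u t)))
            = (\<Sum>l<m'. C (i-n) l * y t (n+l)) - (\<Sum>l<m'. C (i-n) l * \<Psi> l (u t))"
          by (simp only: sum_shift_ivl) (simp add: sum_subtractf right_diff_distrib)
        ultimately show "((\<lambda>s. y s i - \<Psi> (i-n) (u s)) has_real_derivative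
              (\<Sum>j\<in>{n..<n+m'}. C (i-n) (j-n) * (y t j - \<Psi> (j-n) (u t)))) (at t)" by simp
      next
        fix i assume i: "i \<in> {n..<n+m'}"
        have "u 0 = proj n1 x0" unfolding u_def y0 pz by simp
        moreover have "i - n < m'" "\<not> i < n" using i by auto
        ultimately show "y 0 i - \<Psi> (i-n) (u 0) = 0"
          unfolding y0 z0_def concat_def p_def by simp
      qed (use k in auto)
      then show ?thesis by simp
    qed
    define x where "x s = proj n (y s)" for s
    have xy: "x s j = y s j" if "j < n" for s j using that unfolding x_def proj_def by simp
    have xu: "proj n1 (x s) = u s" for s unfolding x_def u_def proj_def n_def by auto
    have xsol: "solves n f x"
      unfolding solves_def
    proof (intro conjI allI impI)
      fix t show "x t \<in> vec n" unfolding x_def vec_def proj_def by simp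
    next
      fix t i assume i: "i < n"
      have "(\<lambda>s. x s i) = (\<lambda>s. y s i)" using xy[OF i] by auto
      moreover have iK: "i < K" using i unfolding K_def by simp
      moreover have "(\<Sum>j<K. Az i j * y t j) = f (x t) i"
      proof (cases "i < n1")
        case True
        then show ?thesis using sa[OF True, of "y t"] yc xy unfolding f_def tri_field_def n_def
          by simp
      next
        case False
        then have i1: "n1 \<le> i" "i - n1 < n2" using i unfolding n_def by auto
        have "g (proj n1 (x t)) (i-n1) = (\<Sum>k<m'. e (i-n1) k * y t (n+k))"
          using rep[OF i1(2), of "proj n1 (x t)"] xu yPsi by simp
        moreover have "(\<Sum>j<n2. A2 (i-n1) j * x t (n1+j)) = (\<Sum>j<n2. A2 (i-n1) j * y t (n1+j))"
          using xy unfolding n_def by simp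
        ultimately show ?thesis using sb[OF i1(1) i, of "y t"] False i unfolding f_def tri_field_def n_def
          by simp
      qed
      ultimately show "((\<lambda>s. x s i) has_real_derivative f (x t) i) (at t)"
        using yd[OF iK, of t] by simp
    qed
    have x0eq: "x 0 = x0"
    proof
      fix i show "x 0 i = x0 i"
        using x0 unfolding x_def y0 z0_def proj_def concat_def vec_def by auto
    qed
    have flx: "flow n f x0 = x"
      unfolding flow_def
      by (rule the_equality) (use xsol x0eq tri_unique_sol[of n1 n2 A1 D A2 g] in \<open>auto simp: f_def n_def\<close>)
    show ?thesis using fl flx unfolding z0_def x_def by simp
  qed
  show ?thesis
    unfolding super_linearizable_def
    apply (rule exI[of _ m])
    apply (rule exI[of _ Az])
    apply (rule exI[of _ "\<lambda>_. 0"])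
    apply (rule exI[of _ p])
    using pvec pinj main unfolding n_def K_def f_def by simp
qed

end
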